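(* Let $n\geq 2$ be an integer and let $CCC(n)$ be the crystal cubic carbon graph with $n$ layers. Then the minimum cardinality of a doubly resolving set of $CCC(n)$ is $\psi(CCC(n))=24\times 7^{n-2}$.
   Context: All graphs are simple and connected; $d(u,v)$ is the shortest-path distance. For an ordered set $Z=\{z_1,\dots,z_m\}$ of vertices, $r(u\,|\,Z)=(d(u,z_1),\dots,d(u,z_m))$. $Z$ is a doubly resolving set of $G$ if for every two distinct vertices $u,v$ of $G$, $r(u|Z)-r(v|Z)\neq \mu(1,\dots,1)$ for every integer $\mu$; $\psi(G)$ denotes the minimum size of a doubly resolving set. The cube $C_4\Box P_2$ is the graph on $\{1,\dots,8\}$ with edges $12,23,34,14,56,67,78,58$ and $15,26,37,48$. The crystal cubic carbon $CCC(n)$ is constructed as follows. Its vertex set is partitioned into layers $L_1,\dots,L_n$. Layer $L_1$ is a copy of $C_4\Box P_2$ with vertices $1,\dots,8$. For $2\leq k\leq n$, layer $L_k$ consists of $8\times 7^{k-2}$ vertex-disjoint copies of $C_4\Box P_2$ (called cubes), each cube having a distinguished vertex (the vertex labelled $1$ in its copy) called its head vertex. Each vertex $r\in L_1$ is joined by an edge to the head vertex of exactly one cube of $L_2$ (distinct vertices of $L_1$ to distinct cubes). For $2\leq k<n$, each of the $7$ non-head vertices of each cube of $L_k$ is joined by an edge to the head vertex of exactly one cube of $L_{k+1}$, in such a way that every cube of $L_{k+1}$ has its head joined to exactly one such vertex. There are no other edges. Thus $CCC(n)$ has $8+64\sum_{k=2}^{n}7^{k-2}$ vertices. *)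

theory Defs
  imports Main
begin

definition gdist :: "('a \<Rightarrow> 'a \<Rightarrow> bool) \<Rightarrow> 'a \<Rightarrow> 'a \<Rightarrow> nat" where
  "gdist E u v = (LEAST k. (E ^^ k) u v)"

definition doubly_resolving :: "'a set \<Rightarrow> ('a \<Rightarrow> 'a \<Rightarrow> bool) \<Rightarrow> 'a set \<Rightarrow> bool" where
  "doubly_resolving V E Z \<longleftrightarrow> Z \<subseteq> V \<and>
     (\<forall>u\<in>V. \<forall>v\<in>V. u \<noteq> v \<longrightarrow>
        (\<forall>\<mu>::int. \<not> (\<forall>z\<in>Z. int (gdist E u z) - int (gdist E v z) = \<mu>)))"

definition psi :: "'a set \<Rightarrow> ('a \<Rightarrow> 'a \<Rightarrow> bool) \<Rightarrow> nat" where
  "psi V E = (LEAST k. \<exists>Z. finite Z \<and> card Z = k \<and> doubly_resolving V E Z)"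

definition cube_edges :: "(nat \<times> nat) set" where
  "cube_edges = {(1,2),(2,3),(3,4),(1,4),(5,6),(6,7),(7,8),(5,8),(1,5),(2,6),(3,7),(4,8)}"

definition cube_adj :: "nat \<Rightarrow> nat \<Rightarrow> bool" where
  "cube_adj i j \<longleftrightarrow> (i, j) \<in> cube_edges \<or> (j, i) \<in> cube_edges"

text \<open>A cube is addressed by a list p: [] is the cube of layer 1; a cube of
layer k \<ge> 2 is addressed by [r1, r2, ..., r_(k-1)] where r1 \<in> {1..8} is the
vertex of L1 it hangs from and r_j \<in> {2..8} (j \<ge> 2) is the non-head vertex of
its parent cube whose edge goes to its head (position 1).\<close>

definition ccc_addr :: "nat \<Rightarrow> nat list \<Rightarrow> bool" where
  "ccc_addr n p \<longleftrightarrow> length p < n \<and> (p \<noteq> [] \<longrightarrow> p ! 0 \<in> {1..8}) \<and>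
     (\<forall>j. 0 < j \<and> j < length p \<longrightarrow> p ! j \<in> {2..8})"

definition ccc_verts :: "nat \<Rightarrow> (nat list \<times> nat) set" where
  "ccc_verts n = {(p, i). ccc_addr n p \<and> i \<in> {1..8}}"

definition ccc_adj :: "nat \<Rightarrow> nat list \<times> nat \<Rightarrow> nat list \<times> nat \<Rightarrow> bool" where
  "ccc_adj n x y \<longleftrightarrow> x \<in> ccc_verts n \<and> y \<in> ccc_verts n \<and>
     ((fst x = fst y \<and> cube_adj (snd x) (snd y)) \<or>
      (fst y = fst x @ [snd x] \<and> snd y = 1) \<or>
      (fst x = fst y @ [snd y] \<and> snd x = 1))"

end

theory Submission
  imports Defs
begin


definition bx :: "nat \<Rightarrow> bool" where "bx i = (i = 2 \<or> i = 3 \<or> i = 6 \<or> i = 7)"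
definition by' :: "nat \<Rightarrow> bool" where "by' i = (i = 3 \<or> i = 4 \<or> i = 7 \<or> i = 8)"
definition bz :: "nat \<Rightarrow> bool" where "bz i = (5 \<le> i)"
definition dc :: "nat \<Rightarrow> nat \<Rightarrow> nat" where
  "dc i k = (if bx i = bx k then 0 else 1) + (if by' i = by' k then 0 else 1) + (if bz i = bz k then 0 else 1)"

lemma ivl8: "{1..8::nat} = {1,2,3,4,5,6,7,8}" by auto

lemma fin_lip: "\<forall>i\<in>{1..8}. \<forall>j\<in>{1..8}. \<forall>k\<in>{1..8}. cube_adj i j \<longrightarrow> dc i k \<le> dc j k + 1"
  unfolding ivl8 by (simp add: cube_adj_def cube_edges_def dc_def bx_def by'_def bz_def)
lemma fin_step: "\<forall>i\<in>{1..8}. \<forall>k\<in>{1..8}. i \<noteq> k \<longrightarrow> (\<exists>j\<in>{1..8}. cube_adj i j \<and> dc j k + 1 = dc i k)"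
  unfolding ivl8 by (simp add: cube_adj_def cube_edges_def dc_def bx_def by'_def bz_def)
lemma fin_low: "\<forall>a\<in>{1..8}. \<forall>b\<in>{1..8}. \<exists>i\<in>{1..8}. \<exists>j\<in>{1..8}. i \<noteq> j \<and>
   int (dc i a) - int (dc j a) = int (dc i 1) - int (dc j 1) \<and> int (dc i b) - int (dc j b) = int (dc i 1) - int (dc j 1)"
  unfolding ivl8 by (simp add: dc_def bx_def by'_def bz_def)
lemma fin_P1: "\<forall>i\<in>{2..8}. \<not> (int (dc i 2) - int (dc 2 1) = int (dc i 4) - int (dc 4 1) \<and> int (dc i 4) - int (dc 4 1) = int (dc i 7) - int (dc 7 1))"
  by (simp add: ivl8 dc_def bx_def by'_def bz_def)
lemma fin_ok: "\<forall>i\<in>{1..8}. \<forall>j\<in>{1..8}. i \<noteq> j \<longrightarrow> \<not> (int (dc i 2) - int (dc j 2) = int (dc i 4) - int (dc j 4) \<and> int (dc i 4) - int (dc j 4) = int (dc i 7) - int (dc j 7) \<and> int (dc i 7) - int (dc j 7) = int (dc i 1) - int (dc j 1))"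
  unfolding ivl8 by (simp add: dc_def bx_def by'_def bz_def)
lemma dc_sym: "dc i k = dc k i" by (simp add: dc_def)
lemma dc_self[simp]: "dc i i = 0" by (simp add: dc_def)

lemma addr_char: "ccc_addr n p \<longleftrightarrow> length p < n \<and> (case p of [] \<Rightarrow> True | x # r \<Rightarrow> x \<in> {1..8} \<and> set r \<subseteq> {2..8})"
proof (cases p)
  case Nil then show ?thesis by (simp add: ccc_addr_def)
next
  case (Cons x r)
  have "(\<forall>j. 0 < j \<and> j < length p \<longrightarrow> p ! j \<in> {2..8}) \<longleftrightarrow> set r \<subseteq> {2..8}"
  proof
    assume H: "\<forall>j. 0 < j \<and> j < length p \<longrightarrow> p ! j \<in> {2..8}"
    show "set r \<subseteq> {2..8}"
    proof
      fix y assume "y \<in> set r"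
      then obtain j where "j < length r" "r ! j = y" by (auto simp: in_set_conv_nth)
      then show "y \<in> {2..8}" using H[rule_format, of "Suc j"] Cons by auto
    qed
  next
    assume H: "set r \<subseteq> {2..8}"
    show "\<forall>j. 0 < j \<and> j < length p \<longrightarrow> p ! j \<in> {2..8}"
    proof (intro allI impI)
      fix j assume "0 < j \<and> j < length p"
      then obtain j' where "j = Suc j'" "j' < length r" using Cons by (cases j) auto
      then show "p ! j \<in> {2..8}" using H Cons nth_mem by fastforce
    qed
  qed
  then show ?thesis using Cons by (simp add: ccc_addr_def)
qed

lemma addr_Nil[simp]: "ccc_addr n [] \<longleftrightarrow> 0 < n" by (simp add: ccc_addr_def)

lemma addr_snoc: "ccc_addr n (p @ [i]) \<longleftrightarrow> Suc (length p) < n \<and> (if p = [] then i \<in> {1..8} else ccc_addr n p \<and> i \<in> {2..8})"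
  by (cases p) (auto simp: addr_char)

lemma addr_prefix: "ccc_addr n (c @ r) \<Longrightarrow> ccc_addr n c"
  by (cases c) (auto simp: addr_char)

lemma addr_butlast: "ccc_addr n c \<Longrightarrow> c \<noteq> [] \<Longrightarrow> ccc_addr n (butlast c) \<and> last c \<in> {1..8}"
proof -
  assume a: "ccc_addr n c" "c \<noteq> []"
  then have "ccc_addr n (butlast c @ [last c])" by simp
  then show ?thesis unfolding addr_snoc by (auto split: if_splits)
qed

locale ccc = fixes n :: nat assumes n2: "2 \<le> n"
begin

abbreviation "V \<equiv> ccc_verts n"
abbreviation "E \<equiv> ccc_adj n"
abbreviation "d \<equiv> gdist (ccc_adj n)"

lemma inV: "(p,i) \<in> V \<longleftrightarrow> ccc_addr n p \<and> i \<in> {1..8}" by (simp add: ccc_verts_def)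
lemma adj_sym: "E x y \<Longrightarrow> E y x" by (auto simp: ccc_adj_def cube_adj_def)
lemma adj_V: "E x y \<Longrightarrow> x \<in> V \<and> y \<in> V" by (simp add: ccc_adj_def)

lemma walk_sym: "(E ^^ m) x y \<Longrightarrow> (E ^^ m) y x"
proof (induction m arbitrary: x)
  case 0 then show ?case by simp
next
  case (Suc m)
  from Suc.prems obtain z where "E x z" "(E ^^ m) z y" by (rule relpowp_Suc_E2)
  then have "(E ^^ m) y z" using Suc.IH by blast
  then show ?case using \<open>E x z\<close> adj_sym relpowp_Suc_I by metis
qed

lemma d_sym: "d x y = d y x"
proof -
  have "(\<lambda>k. (E ^^ k) x y) = (\<lambda>k. (E ^^ k) y x)" using walk_sym by blast
  then show ?thesis unfolding gdist_def by simp
qed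

lemma cube_walk: "ccc_addr n p \<Longrightarrow> i \<in> {1..8} \<Longrightarrow> k \<in> {1..8} \<Longrightarrow> (E ^^ dc i k) (p,i) (p,k)"
proof (induction "dc i k" arbitrary: i)
  case 0
  then have "i = k" using fin_step by fastforce
  then show ?case by simp
next
  case (Suc m)
  then have "i \<noteq> k" by (metis dc_self nat.distinct(1))
  then obtain j where j: "j \<in> {1..8}" "cube_adj i j" "dc j k + 1 = dc i k" using fin_step Suc.prems by blast
  then have "dc j k = m" using Suc.hyps(2) by simp
  then have "(E ^^ m) (p,j) (p,k)" using Suc.hyps(1) j Suc.prems by metis
  moreover have "E (p,i) (p,j)" using j Suc.prems by (simp add: ccc_adj_def ccc_verts_def)
  ultimately show ?case using Suc.hyps(2) relpowp_Suc_I2 by metis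
qed

lemma rt_sym: "E\<^sup>*\<^sup>* a b \<Longrightarrow> E\<^sup>*\<^sup>* b a"
  by (induction rule: rtranclp_induct) (auto intro: converse_rtranclp_into_rtranclp adj_sym)

lemma conn_root: "ccc_addr n p \<Longrightarrow> i \<in> {1..8} \<Longrightarrow> E\<^sup>*\<^sup>* (p,i) ([],1)"
proof (induction "length p" arbitrary: p i)
  case 0
  then have "p = []" by simp
  then show ?case using cube_walk[of p i 1] 0 relpowp_imp_rtranclp by fastforce
next
  case (Suc m)
  then have pne: "p \<noteq> []" by auto
  have w1: "E\<^sup>*\<^sup>* (p,i) (p,1)" using cube_walk[of p i 1] Suc.prems relpowp_imp_rtranclp by fastforce
  have bl: "ccc_addr n (butlast p)" "last p \<in> {1..8}" using addr_butlast Suc.prems pne by auto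
  have "E (p,1) (butlast p, last p)" using bl Suc.prems pne
    by (simp add: ccc_adj_def ccc_verts_def)
  moreover have "E\<^sup>*\<^sup>* (butlast p, last p) ([],1)" using Suc.hyps(1)[of "butlast p" "last p"] bl Suc.hyps(2) by simp
  ultimately show ?case using w1 by (meson converse_rtranclp_into_rtranclp rtranclp_trans)
qed

lemma conn: "x \<in> V \<Longrightarrow> y \<in> V \<Longrightarrow> \<exists>m. (E ^^ m) x y"
proof -
  assume "x \<in> V" "y \<in> V"
  then have "E\<^sup>*\<^sup>* x ([],1)" "E\<^sup>*\<^sup>* y ([],1)" using conn_root by (auto simp: ccc_verts_def)
  then have "E\<^sup>*\<^sup>* x y" using rt_sym rtranclp_trans by metis
  then show ?thesis by (rule rtranclp_imp_relpowp)
qed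

lemma d_walk: "x \<in> V \<Longrightarrow> y \<in> V \<Longrightarrow> (E ^^ d x y) x y"
  unfolding gdist_def using conn by (metis LeastI_ex)
lemma d_le: "(E ^^ m) x y \<Longrightarrow> d x y \<le> m"
  unfolding gdist_def by (rule Least_le)
lemma d_self[simp]: "d x x = 0" using d_le[of 0 x x] by simp
lemma d_pos: "x \<in> V \<Longrightarrow> y \<in> V \<Longrightarrow> x \<noteq> y \<Longrightarrow> 0 < d x y"
  using d_walk[of x y] by (metis gr0I relpowp_0_E)
lemma tri: "x \<in> V \<Longrightarrow> y \<in> V \<Longrightarrow> z \<in> V \<Longrightarrow> d x z \<le> d x y + d y z"
proof -
  assume a: "x \<in> V" "y \<in> V" "z \<in> V"
  have "(E ^^ d x y OO E ^^ d y z) x z" using d_walk a by (meson relcomppI)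
  then have "(E ^^ (d x y + d y z)) x z" by (simp add: relpowp_add)
  then show ?thesis by (rule d_le)
qed
lemma d_adj: "E x y \<Longrightarrow> d x y \<le> 1" by (metis d_le relpowp_1)

end

context ccc begin

definition Sub :: "nat list \<Rightarrow> (nat list \<times> nat) set" where
  "Sub c = {x \<in> V. \<exists>r. fst x = c @ r}"

lemma cross:
  assumes "c \<noteq> []" "E x y" "x \<in> Sub c" "y \<notin> Sub c"
  shows "x = (c,1) \<and> y = (butlast c, last c)"
proof -
  obtain p i q j where xy: "x = (p,i)" "y = (q,j)" by (cases x, cases y)
  from assms(3) xy obtain r where pr: "p = c @ r" by (auto simp: Sub_def)
  have yV: "y \<in> V" using adj_V assms(2) by blast
  then have nq: "\<not> (\<exists>r. q = c @ r)" using assms(4) xy by (auto simp: Sub_def)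
  from assms(2) xy have "(p = q \<and> cube_adj i j) \<or> (q = p @ [i] \<and> j = 1) \<or> (p = q @ [j] \<and> i = 1)"
    by (simp add: ccc_adj_def)
  moreover have "p \<noteq> q" using nq pr by blast
  moreover have "q \<noteq> p @ [i]" using nq pr by auto
  ultimately have h: "p = q @ [j]" "i = 1" by auto
  have "r = []"
  proof (rule ccontr)
    assume "r \<noteq> []"
    then obtain r0 t where "r = r0 @ [t]" by (metis rev_exhaust)
    then have "q = c @ r0" using h pr by simp
    then show False using nq by blast
  qed
  then show ?thesis using h pr xy by simp
qed

lemma decomp:
  assumes "c \<noteq> []"
  shows "(E ^^ m) a b \<Longrightarrow> a \<in> Sub c \<Longrightarrow> b \<notin> Sub c \<Longrightarrow>
    \<exists>k1 k2. m = k1 + 1 + k2 \<and> (E ^^ k1) a (c,1) \<and> (E ^^ k2) (butlast c, last c) b"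
proof (induction m arbitrary: a)
  case 0 then show ?case by auto
next
  case (Suc m)
  from Suc.prems(1) obtain y where y: "E a y" "(E ^^ m) y b" by (rule relpowp_Suc_E2)
  show ?case
  proof (cases "y \<in> Sub c")
    case True
    then obtain k1 k2 where k: "m = k1 + 1 + k2" "(E ^^ k1) y (c,1)" "(E ^^ k2) (butlast c, last c) b"
      using Suc.IH y Suc.prems by blast
    have "(E ^^ Suc k1) a (c,1)" using y(1) k(2) by (rule relpowp_Suc_I2)
    then show ?thesis using k by (intro exI[of _ "Suc k1"] exI[of _ k2]) simp
  next
    case False
    then have "a = (c,1)" "y = (butlast c, last c)" using cross[OF assms y(1) Suc.prems(2)] by auto
    then show ?thesis using y by (intro exI[of _ 0] exI[of _ m]) simp
  qed
qed

lemma x0V: "c \<noteq> [] \<Longrightarrow> ccc_addr n c \<Longrightarrow> (butlast c, last c) \<in> V"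
  using addr_butlast inV by blast

lemma head_adj: "c \<noteq> [] \<Longrightarrow> ccc_addr n c \<Longrightarrow> E (c,1) (butlast c, last c)"
  using x0V[of c] by (simp add: ccc_adj_def ccc_verts_def)

lemma Sub_addr: "x \<in> Sub c \<Longrightarrow> ccc_addr n c"
  by (auto simp: Sub_def ccc_verts_def intro: addr_prefix)

lemma gate:
  assumes "c \<noteq> []" "a \<in> Sub c" "b \<in> V" "b \<notin> Sub c"
  shows "d a b = d a (c,1) + 1 + d (butlast c, last c) b"
proof -
  have cA: "ccc_addr n c" using Sub_addr assms(2) .
  have aV: "a \<in> V" using assms(2) by (simp add: Sub_def)
  have hV: "(c,1) \<in> V" using cA by (simp add: ccc_verts_def)
  have x0: "(butlast c, last c) \<in> V" using x0V assms(1) cA .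
  have "d a b \<le> d a (c,1) + d (c,1) b" using tri aV hV assms(3) .
  also have "d (c,1) b \<le> d (c,1) (butlast c, last c) + d (butlast c, last c) b" using tri hV x0 assms(3) .
  also have "d (c,1) (butlast c, last c) \<le> 1" using d_adj head_adj assms(1) cA by blast
  finally have le: "d a b \<le> d a (c,1) + 1 + d (butlast c, last c) b" by simp
  obtain k1 k2 where k: "d a b = k1 + 1 + k2" "(E ^^ k1) a (c,1)" "(E ^^ k2) (butlast c, last c) b"
    using decomp[OF assms(1) d_walk[OF aV assms(3)] assms(2) assms(4)] by blast
  have "d a (c,1) \<le> k1" "d (butlast c, last c) b \<le> k2" using k d_le by auto
  then show ?thesis using le k(1) by linarith
qed

definition leaf :: "nat list \<Rightarrow> bool" where
  "leaf L \<longleftrightarrow> ccc_addr n L \<and> length L = n - 1"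

lemma leaf_ne: "leaf L \<Longrightarrow> L \<noteq> []" using n2 by (auto simp: leaf_def)

lemma Sub_leaf: "leaf L \<Longrightarrow> x \<in> Sub L \<longleftrightarrow> x \<in> V \<and> fst x = L"
proof -
  assume l: "leaf L"
  { fix r assume "x \<in> V" "fst x = L @ r"
    then have "length (L @ r) < n" by (cases x) (auto simp: ccc_verts_def ccc_addr_def)
    then have "length L + length r < n" by simp
    moreover have "length L = n - 1" using l by (simp add: leaf_def)
    ultimately have "length r = 0" using n2 by linarith
    then have "r = []" by simp }
  then show ?thesis by (auto simp: Sub_def)
qed

lemma F2:
  assumes l: "leaf L" and i: "i \<in> {1..8}" and k: "k \<in> {1..8}"
  shows "d (L,i) (L,k) = dc i k"
proof (rule antisym)
  have LA: "ccc_addr n L" using l by (simp add: leaf_def)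
  show "d (L,i) (L,k) \<le> dc i k" using cube_walk[OF LA i k] by (rule d_le)
  define f where "f x = (if fst x = L then dc (snd x) k else dc 1 k + 1)" for x :: "nat list \<times> nat"
  have lip: "f x \<le> f y + 1" if e: "E x y" for x y
  proof -
    obtain p a q b where xy: "x = (p,a)" "y = (q,b)" by (cases x, cases y)
    have V: "ccc_addr n p" "a \<in> {1..8}" "ccc_addr n q" "b \<in> {1..8}" using adj_V[OF e] xy by (auto simp: ccc_verts_def)
    have lp: "length p < n" "length q < n" using V by (auto simp: ccc_addr_def)
    from e xy have "(p = q \<and> cube_adj a b) \<or> (q = p @ [a] \<and> b = 1) \<or> (p = q @ [b] \<and> a = 1)"
      by (simp add: ccc_adj_def)
    then show ?thesis
    proof (elim disjE conjE)
      assume "p = q" "cube_adj a b"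
      then show ?thesis using fin_lip V xy k by (auto simp: f_def)
    next
      assume h: "q = p @ [a]" "b = 1"
      then have "p \<noteq> L" using lp l by (auto simp: leaf_def)
      then show ?thesis using h xy by (auto simp: f_def)
    next
      assume h: "p = q @ [b]" "a = 1"
      then have "q \<noteq> L" using lp l by (auto simp: leaf_def)
      then show ?thesis using h xy by (auto simp: f_def)
    qed
  qed
  have gen: "(E ^^ m) a b \<Longrightarrow> f a \<le> f b + m" for m a b
  proof (induction m arbitrary: a)
    case 0 then show ?case by simp
  next
    case (Suc m)
    from Suc.prems obtain y where "E a y" "(E ^^ m) y b" by (rule relpowp_Suc_E2)
    then show ?case using Suc.IH lip by fastforce
  qed
  have "(L,i) \<in> V" "(L,k) \<in> V" using LA i k by (auto simp: ccc_verts_def)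
  then have "f (L,i) \<le> f (L,k) + d (L,i) (L,k)" using gen d_walk by blast
  then show "dc i k \<le> d (L,i) (L,k)" by (simp add: f_def)
qed

lemma leaf_V: "leaf L \<Longrightarrow> i \<in> {1..8} \<Longrightarrow> (L,i) \<in> V" by (simp add: leaf_def ccc_verts_def)

lemma F3:
  assumes l: "leaf L" and y: "y \<in> V" "fst y \<noteq> L"
  shows "d (L,1) y = 1 + d (butlast L, last L) y"
proof -
  have "(L,1) \<in> Sub L" "y \<notin> Sub L" using Sub_leaf[OF l] leaf_V[OF l] y by auto
  then show ?thesis using gate[OF leaf_ne[OF l] _ y(1)] by simp
qed

lemma F1:
  assumes l: "leaf L" and i: "i \<in> {1..8}" and y: "y \<in> V" "fst y \<noteq> L"
  shows "d (L,i) y = dc i 1 + d (L,1) y"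
proof -
  have "(L,i) \<in> Sub L" "y \<notin> Sub L" using Sub_leaf[OF l] leaf_V[OF l i] y by auto
  then have "d (L,i) y = d (L,i) (L,1) + 1 + d (butlast L, last L) y" using gate[OF leaf_ne[OF l] _ y(1)] by simp
  then show ?thesis using F3[OF l y] F2[OF l i] by simp
qed

lemma leaf_below: "ccc_addr n c \<Longrightarrow> c \<noteq> [] \<Longrightarrow> \<exists>L r. leaf L \<and> L = c @ r"
proof -
  assume a: "ccc_addr n c" "c \<noteq> []"
  define L where "L = c @ replicate (n - 1 - length c) 2"
  have "length c < n" using a by (simp add: ccc_addr_def)
  then have len: "length L = n - 1" by (simp add: L_def)
  obtain x r where c: "c = x # r" using a by (cases c) auto
  have "ccc_addr n L" using a len n2 by (auto simp: L_def c addr_char)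
  then show ?thesis using len by (auto simp: leaf_def L_def)
qed

lemma leaf_other: "c \<noteq> [] \<Longrightarrow> \<exists>L. leaf L \<and> \<not> (\<exists>r. L = c @ r)"
proof -
  assume a: "c \<noteq> []"
  define x :: nat where "x = (if hd c = 1 then 2 else 1)"
  define L where "L = x # replicate (n - 2) 2"
  have "ccc_addr n L" using n2 by (auto simp: L_def x_def addr_char)
  moreover have "length L = n - 1" using n2 by (simp add: L_def)
  moreover have "\<not> (\<exists>r. L = c @ r)" using a by (cases c) (auto simp: L_def x_def)
  ultimately show ?thesis by (auto simp: leaf_def)
qed

end

context ccc begin

lemma lemE:
  assumes uV: "(p,i) \<in> V" and lp: "length p < n - 1" and vV: "v \<in> V" and vu: "v \<noteq> (p,i)"
  shows "\<exists>L. leaf L \<and> d v (L,1) = d v (p,i) + d (p,i) (L,1)"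
proof (cases "p = [] \<or> i \<noteq> 1")
  case True
  define c where "c = p @ [i]"
  have pA: "ccc_addr n p" "i \<in> {1..8}" using uV by (auto simp: ccc_verts_def)
  have cA: "ccc_addr n c" using True pA lp unfolding c_def addr_snoc by (auto simp: addr_char)
  have cne: "c \<noteq> []" "butlast c = p" "last c = i" by (auto simp: c_def)
  have uS: "(p,i) \<notin> Sub c" by (auto simp: Sub_def c_def)
  show ?thesis
  proof (cases "v \<in> Sub c")
    case False
    obtain L r where L: "leaf L" "L = c @ r" using leaf_below[OF cA cne(1)] by blast
    have hS: "(L,1) \<in> Sub c" using L leaf_V[OF L(1)] by (auto simp: Sub_def)
    have g1: "d (L,1) v = d (L,1) (c,1) + 1 + d (p,i) v" using gate[OF cne(1) hS vV False] cne by simp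
    have g2: "d (L,1) (p,i) = d (L,1) (c,1) + 1" using gate[OF cne(1) hS uV uS] cne by simp
    have s: "d v (L,1) = d (L,1) v" "d (p,i) (L,1) = d (L,1) (p,i)" "d v (p,i) = d (p,i) v" by (rule d_sym)+
    show ?thesis using g1 g2 L(1) s by (intro exI[of _ L]) simp
  next
    case True
    obtain L where L: "leaf L" "\<not> (\<exists>r. L = c @ r)" using leaf_other[OF cne(1)] by blast
    have hS: "(L,1) \<notin> Sub c" using L by (auto simp: Sub_def)
    have g1: "d v (L,1) = d v (c,1) + 1 + d (p,i) (L,1)" using gate[OF cne(1) True leaf_V[OF L(1)] hS] cne by simp
    have g2: "d v (p,i) = d v (c,1) + 1" using gate[OF cne(1) True uV uS] cne by simp
    show ?thesis using g1 g2 L(1) by (intro exI[of _ L]) simp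
  qed
next
  case False
  then have pne: "p \<noteq> []" and i1: "i = 1" by auto
  have pA: "ccc_addr n p" using uV by (auto simp: ccc_verts_def)
  have uS: "(p,i) \<in> Sub p" using uV by (auto simp: Sub_def)
  show ?thesis
  proof (cases "v \<in> Sub p")
    case False
    obtain L r where L: "leaf L" "L = p @ r" using leaf_below[OF pA pne] by blast
    have hS: "(L,1) \<in> Sub p" using L leaf_V[OF L(1)] by (auto simp: Sub_def)
    have g1: "d (L,1) v = d (L,1) (p,1) + 1 + d (butlast p, last p) v" using gate[OF pne hS vV False] by simp
    have g2: "d (p,i) v = 1 + d (butlast p, last p) v" using gate[OF pne uS vV False] i1 by simp
    have s: "d v (L,1) = d (L,1) v" "d (p,i) (L,1) = d (L,1) (p,i)" "d v (p,i) = d (p,i) v" by (rule d_sym)+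
    show ?thesis using g1 g2 L(1) s i1 by (intro exI[of _ L]) simp
  next
    case True
    obtain L where L: "leaf L" "\<not> (\<exists>r. L = p @ r)" using leaf_other[OF pne] by blast
    have hS: "(L,1) \<notin> Sub p" using L by (auto simp: Sub_def)
    have g1: "d v (L,1) = d v (p,1) + 1 + d (butlast p, last p) (L,1)" using gate[OF pne True leaf_V[OF L(1)] hS] by simp
    have g2: "d (p,i) (L,1) = 1 + d (butlast p, last p) (L,1)" using gate[OF pne uS leaf_V[OF L(1)] hS] i1 by simp
    show ?thesis using g1 g2 L(1) i1 by (intro exI[of _ L]) simp
  qed
qed

definition Z0 :: "(nat list \<times> nat) set" where "Z0 = {L. leaf L} \<times> {2,4,7}"

definition sep :: "nat list \<times> nat \<Rightarrow> nat list \<times> nat \<Rightarrow> bool" where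
  "sep u v \<longleftrightarrow> (\<exists>z1\<in>Z0. \<exists>z2\<in>Z0. int (d u z1) - int (d v z1) \<noteq> int (d u z2) - int (d v z2))"

lemma sepI: "z1 \<in> Z0 \<Longrightarrow> z2 \<in> Z0 \<Longrightarrow> int (d u z1) - int (d v z1) \<noteq> int (d u z2) - int (d v z2) \<Longrightarrow> sep u v"
  unfolding sep_def by blast

lemma sep_sym: assumes "sep u v" shows "sep v u"
proof -
  obtain z1 z2 where "z1 \<in> Z0" "z2 \<in> Z0" "int (d u z1) - int (d v z1) \<noteq> int (d u z2) - int (d v z2)"
    using assms unfolding sep_def by blast
  then show ?thesis by (intro sepI[of z1 z2]) auto
qed

lemma Zd: "leaf L \<Longrightarrow> k \<in> {1..8} \<Longrightarrow> x \<in> V \<Longrightarrow> fst x \<noteq> L \<Longrightarrow> d x (L,k) = d x (L,1) + dc 1 k"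
proof -
  assume a: "leaf L" "k \<in> {1..8}" "x \<in> V" "fst x \<noteq> L"
  have "d (L,k) x = dc k 1 + d (L,1) x" using F1 a by blast
  moreover have "d x (L,k) = d (L,k) x" "d x (L,1) = d (L,1) x" by (rule d_sym)+
  moreover have "dc k 1 = dc 1 k" by (rule dc_sym)
  ultimately show ?thesis by simp
qed

lemma inZ0: "leaf L \<Longrightarrow> k \<in> {2,4,7} \<Longrightarrow> (L,k) \<in> Z0" by (simp add: Z0_def)

lemma case1:
  assumes l: "leaf L" and i: "i \<in> {1..8}" and j: "j \<in> {1..8}" and ij: "i \<noteq> j"
  shows "sep (L,i) (L,j)"
proof -
  define D where "D z = int (d (L,i) z) - int (d (L,j) z)" for z
  have DL: "D (L,k) = int (dc i k) - int (dc j k)" if "k \<in> {1..8}" for k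
    using F2[OF l i that] F2[OF l j that] by (simp add: D_def)
  obtain L' where L': "leaf L'" "\<not> (\<exists>r. L' = L @ r)" using leaf_other[OF leaf_ne[OF l]] by blast
  have z'V: "(L',2) \<in> V" "fst (L',2) \<noteq> L" using leaf_V[OF L'(1)] L'(2) by auto
  have DL': "D (L',2) = int (dc i 1) - int (dc j 1)"
    using F1[OF l i z'V] F1[OF l j z'V] by (simp add: D_def)
  have fo: "\<not> (int (dc i 2) - int (dc j 2) = int (dc i 4) - int (dc j 4) \<and> int (dc i 4) - int (dc j 4) = int (dc i 7) - int (dc j 7) \<and> int (dc i 7) - int (dc j 7) = int (dc i 1) - int (dc j 1))"
    using fin_ok i j ij by blast
  have "\<not> (D (L,2) = D (L,4) \<and> D (L,4) = D (L,7) \<and> D (L,7) = D (L',2))"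
    using fo DL[of 2] DL[of 4] DL[of 7] DL' by simp
  then consider "D (L,2) \<noteq> D (L,4)" | "D (L,4) \<noteq> D (L,7)" | "D (L,7) \<noteq> D (L',2)" by blast
  then show ?thesis
  proof cases
    case 1 then show ?thesis unfolding D_def by (rule sepI[OF inZ0[OF l] inZ0[OF l], rotated 2]) auto
  next
    case 2 then show ?thesis unfolding D_def by (rule sepI[OF inZ0[OF l] inZ0[OF l], rotated 2]) auto
  next
    case 3 then show ?thesis unfolding D_def by (rule sepI[OF inZ0[OF l] inZ0[OF L'(1)], rotated 2]) auto
  qed
qed

lemma case2:
  assumes l: "leaf L" and i: "i \<in> {1..8}" and v: "v \<in> V" "fst v \<noteq> L"
  shows "sep (L,i) v"
proof -
  define D where "D z = int (d (L,i) z) - int (d v z)" for z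
  have dv: "d v (L,k) = dc k 1 + d (L,1) v" if "k \<in> {1..8}" for k
    using F1[OF l that v] d_sym by simp
  show ?thesis
  proof (cases "i = 1")
    case False
    have DL: "D (L,k) = int (dc i k) - int (dc k 1) - int (d (L,1) v)" if "k \<in> {1..8}" for k
      using F2[OF l i that] dv[OF that] by (simp add: D_def)
    have i2: "i \<in> {2..8}" using i False by auto
    have fo: "\<not> (int (dc i 2) - int (dc 2 1) = int (dc i 4) - int (dc 4 1) \<and> int (dc i 4) - int (dc 4 1) = int (dc i 7) - int (dc 7 1))"
      using fin_P1 i2 by blast
    have "\<not> (D (L,2) = D (L,4) \<and> D (L,4) = D (L,7))"
      using fo DL[of 2] DL[of 4] DL[of 7] by simp
    then consider "D (L,2) \<noteq> D (L,4)" | "D (L,4) \<noteq> D (L,7)" by blast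
    then show ?thesis
    proof cases
      case 1 then show ?thesis unfolding D_def by (rule sepI[OF inZ0[OF l] inZ0[OF l], rotated 2]) auto
    next
      case 2 then show ?thesis unfolding D_def by (rule sepI[OF inZ0[OF l] inZ0[OF l], rotated 2]) auto
    qed
  next
    case True
    obtain L' where L': "leaf L'" "\<not> (\<exists>r. L' = L @ r)" using leaf_other[OF leaf_ne[OF l]] by blast
    have z'V: "(L',2) \<in> V" "fst (L',2) \<noteq> L" using leaf_V[OF L'(1)] L'(2) by auto
    define x0 where "x0 = (butlast L, last L)"
    have x0V: "x0 \<in> V" using x0V[OF leaf_ne[OF l]] l by (simp add: leaf_def x0_def)
    have a1: "d (L,1) (L',2) = 1 + d x0 (L',2)" using F3[OF l z'V] by (simp add: x0_def)
    have a2: "d (L,1) v = 1 + d x0 v" using F3[OF l v] by (simp add: x0_def)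
    have a3: "d v (L',2) \<le> d v x0 + d x0 (L',2)" using tri v(1) x0V z'V(1) by blast
    have a4: "D (L,2) = - int (d (L,1) v)" using F2[OF l i, of 2] dv[of 2] True by (simp add: D_def dc_sym)
    have "D (L',2) \<noteq> D (L,2)" using a1 a2 a3 a4 True d_sym[of v x0] by (simp add: D_def)
    then show ?thesis unfolding D_def by (rule sepI[OF inZ0[OF L'(1)] inZ0[OF l], rotated 2]) auto
  qed
qed

lemma case4:
  assumes u: "(p,i) \<in> V" "length p < n - 1" and v: "(q,j) \<in> V" "length q < n - 1" and uv: "(p,i) \<noteq> (q,j)"
  shows "sep (p,i) (q,j)"
proof -
  obtain L1 where L1: "leaf L1" "d (q,j) (L1,1) = d (q,j) (p,i) + d (p,i) (L1,1)"
    using lemE[OF u v(1) not_sym[OF uv]] by blast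
  obtain L2 where L2: "leaf L2" "d (p,i) (L2,1) = d (p,i) (q,j) + d (q,j) (L2,1)"
    using lemE[OF v u(1) uv] by blast
  have f1: "p \<noteq> L1" "q \<noteq> L1" "p \<noteq> L2" "q \<noteq> L2" using L1(1) L2(1) u(2) v(2) by (auto simp: leaf_def)
  have e1: "int (d (p,i) (L1,2)) - int (d (q,j) (L1,2)) = - int (d (p,i) (q,j))"
    using Zd[OF L1(1), of 2 "(p,i)"] Zd[OF L1(1), of 2 "(q,j)"] f1 u v L1(2) d_sym[of "(q,j)" "(p,i)"] by simp
  have e2: "int (d (p,i) (L2,2)) - int (d (q,j) (L2,2)) = int (d (p,i) (q,j))"
    using Zd[OF L2(1), of 2 "(p,i)"] Zd[OF L2(1), of 2 "(q,j)"] f1 u v L2(2) by simp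
  have "0 < d (p,i) (q,j)" using d_pos u v uv by blast
  then have "int (d (p,i) (L1,2)) - int (d (q,j) (L1,2)) \<noteq> int (d (p,i) (L2,2)) - int (d (q,j) (L2,2))"
    using e1 e2 by simp
  then show ?thesis by (rule sepI[OF inZ0[OF L1(1)] inZ0[OF L2(1)], rotated 2]) auto
qed

lemma all_sep: assumes "u \<in> V" "v \<in> V" "u \<noteq> v" shows "sep u v"
proof -
  obtain p i q j where uv: "u = (p,i)" "v = (q,j)" by (cases u, cases v)
  have A: "ccc_addr n p" "i \<in> {1..8}" "ccc_addr n q" "j \<in> {1..8}" using assms uv by (auto simp: ccc_verts_def)
  have lp: "length p < n" "length q < n" using A by (auto simp: ccc_addr_def)
  show ?thesis
  proof (cases "leaf p")
    case True
    show ?thesis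
    proof (cases "q = p")
      case True
      then show ?thesis using case1[OF \<open>leaf p\<close> A(2) A(4)] assms uv by auto
    next
      case False
      then show ?thesis using case2[OF \<open>leaf p\<close> A(2) assms(2)] uv by auto
    qed
  next
    case np: False
    show ?thesis
    proof (cases "leaf q")
      case True
      have "p \<noteq> q" using np True by auto
      then show ?thesis using case2[OF True A(4) assms(1)] uv sep_sym by auto
    next
      case False
      have "length p < n - 1" "length q < n - 1" using np False A lp by (auto simp: leaf_def)
      then show ?thesis using case4 assms uv by auto
    qed
  qed
qed

lemma drs_Z0: "doubly_resolving V E Z0"
  unfolding doubly_resolving_def
proof (intro conjI ballI impI allI)
  show "Z0 \<subseteq> V" by (auto simp: Z0_def leaf_V)
next
  fix u v \<mu> assume "u \<in> V" "v \<in> V" "u \<noteq> v"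
  then have "sep u v" by (rule all_sep)
  then obtain z1 z2 where z: "z1 \<in> Z0" "z2 \<in> Z0" and ne: "int (d u z1) - int (d v z1) \<noteq> int (d u z2) - int (d v z2)"
    unfolding sep_def by blast
  show "\<not> (\<forall>z\<in>Z0. int (d u z) - int (d v z) = \<mu>)"
  proof
    assume H: "\<forall>z\<in>Z0. int (d u z) - int (d v z) = \<mu>"
    have "int (d u z1) - int (d v z1) = \<mu>" "int (d u z2) - int (d v z2) = \<mu>" using H z by auto
    then show False using ne by simp
  qed
qed

end

context ccc begin

lemma leaves_eq: "{L. leaf L} = (\<lambda>(x,r). x # r) ` ({1..8} \<times> {r. set r \<subseteq> {2..8} \<and> length r = n - 2})"
proof
  show "{L. leaf L} \<subseteq> (\<lambda>(x,r). x # r) ` ({1..8} \<times> {r. set r \<subseteq> {2..8} \<and> length r = n - 2})"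
  proof
    fix L assume "L \<in> {L. leaf L}"
    then have l: "leaf L" by simp
    then obtain x r where L: "L = x # r" using leaf_ne by (cases L) auto
    have "x \<in> {1..8}" "set r \<subseteq> {2..8}" "length r = n - 2" using l n2 by (auto simp: leaf_def L addr_char)
    then show "L \<in> (\<lambda>(x,r). x # r) ` ({1..8} \<times> {r. set r \<subseteq> {2..8} \<and> length r = n - 2})"
      using L by force
  qed
next
  show "(\<lambda>(x,r). x # r) ` ({1..8} \<times> {r. set r \<subseteq> {2..8} \<and> length r = n - 2}) \<subseteq> {L. leaf L}"
    using n2 by (auto simp: leaf_def addr_char)
qed

lemma fin_leaves: "finite {L. leaf L}"
  unfolding leaves_eq by (intro finite_imageI finite_cartesian_product finite_lists_length_eq) auto

lemma card_leaves: "card {L. leaf L} = 8 * 7 ^ (n - 2)"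
proof -
  have inj: "inj_on (\<lambda>(x,r). x # r) ({1..8::nat} \<times> {r. set r \<subseteq> {2..8::nat} \<and> length r = n - 2})"
    by (auto simp: inj_on_def)
  have "card {L. leaf L} = card ({1..8::nat} \<times> {r. set r \<subseteq> {2..8::nat} \<and> length r = n - 2})"
    unfolding leaves_eq using inj by (rule card_image)
  also have "\<dots> = 8 * 7 ^ (n - 2)" by (simp add: card_cartesian_product card_lists_length_eq)
  finally show ?thesis .
qed

lemma small_set:
  assumes "finite K" "card K \<le> 2" "K \<subseteq> A" "(1::nat) \<in> A"
  shows "\<exists>a\<in>A. \<exists>b\<in>A. K \<subseteq> {a,b}"
proof (cases "K = {}")
  case True then show ?thesis using assms by blast
next
  case False
  then obtain a where a: "a \<in> K" by blast
  show ?thesis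
  proof (cases "K - {a} = {}")
    case True then show ?thesis using a assms by blast
  next
    case False
    then obtain b where b: "b \<in> K" "b \<noteq> a" by blast
    have "card (K - {a,b}) = card K - 2" using a b assms(1) by (simp add: card_Diff_subset)
    then have "card (K - {a,b}) = 0" using assms(2) by simp
    then have "K - {a,b} = {}" using assms(1) by simp
    then show ?thesis using a b assms(3) by blast
  qed
qed

lemma low_leaf:
  assumes drs: "doubly_resolving V E Z" and l: "leaf L"
  shows "3 \<le> card {z\<in>Z. fst z = L}"
proof (rule ccontr)
  assume "\<not> 3 \<le> card {z\<in>Z. fst z = L}"
  then have c2: "card {z\<in>Z. fst z = L} \<le> 2" by simp
  have ZV: "Z \<subseteq> V" using drs by (simp add: doubly_resolving_def)
  have sub: "{z\<in>Z. fst z = L} \<subseteq> {L} \<times> {1..8}" using ZV by (auto simp: ccc_verts_def)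
  then have fin: "finite {z\<in>Z. fst z = L}" by (rule finite_subset) auto
  define K where "K = snd ` {z\<in>Z. fst z = L}"
  have "card K \<le> 2" unfolding K_def using card_image_le[OF fin, of snd] c2 by linarith
  moreover have "finite K" using fin by (simp add: K_def)
  moreover have "K \<subseteq> {1..8}" using sub by (auto simp: K_def)
  ultimately obtain a b where ab: "a \<in> {1..8}" "b \<in> {1..8}" "K \<subseteq> {a,b}" using small_set[of K "{1..8}"] by auto
  obtain i j where ij: "i \<in> {1..8}" "j \<in> {1..8}" "i \<noteq> j"
    "int (dc i a) - int (dc j a) = int (dc i 1) - int (dc j 1)"
    "int (dc i b) - int (dc j b) = int (dc i 1) - int (dc j 1)"
    using fin_low ab(1,2) by blast
  have uV: "(L,i) \<in> V" "(L,j) \<in> V" using leaf_V[OF l] ij by auto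
  have "\<forall>z\<in>Z. int (d (L,i) z) - int (d (L,j) z) = int (dc i 1) - int (dc j 1)"
  proof
    fix z assume zZ: "z \<in> Z"
    then have zV: "z \<in> V" using ZV by blast
    show "int (d (L,i) z) - int (d (L,j) z) = int (dc i 1) - int (dc j 1)"
    proof (cases "fst z = L")
      case True
      obtain k where z: "z = (L,k)" using True by (cases z) auto
      have "z \<in> {z\<in>Z. fst z = L}" using zZ True by simp
      then have "snd z \<in> K" unfolding K_def by (rule imageI)
      then have "k \<in> K" using z by simp
      then have k: "k = a \<or> k = b" using ab by blast
      have k8: "k \<in> {1..8}" using zV z by (simp add: ccc_verts_def)
      show ?thesis using F2[OF l ij(1) k8] F2[OF l ij(2) k8] k ij z by auto
    next
      case False
      show ?thesis using F1[OF l ij(1) zV False] F1[OF l ij(2) zV False] by simp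
    qed
  qed
  then show False using drs uV ij(3) unfolding doubly_resolving_def by blast
qed

lemma low:
  assumes drs: "doubly_resolving V E Z" and fin: "finite Z"
  shows "3 * (8 * 7 ^ (n - 2)) \<le> card Z"
proof -
  define A where "A L = {z\<in>Z. fst z = L}" for L
  have "card (\<Union>L\<in>{L. leaf L}. A L) = (\<Sum>L\<in>{L. leaf L}. card (A L))"
    by (rule card_UN_disjoint) (auto simp: fin_leaves A_def fin)
  also have "\<dots> \<ge> (\<Sum>L\<in>{L. leaf L}. 3)" using low_leaf[OF drs] by (intro sum_mono) (simp add: A_def)
  finally have "3 * card {L. leaf L} \<le> card (\<Union>L\<in>{L. leaf L}. A L)" by simp
  also have "\<dots> \<le> card Z" using fin by (intro card_mono) (auto simp: A_def)
  finally show ?thesis using card_leaves by simp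
qed

lemma Z0_props: "finite Z0" "card Z0 = 24 * 7 ^ (n - 2)"
  unfolding Z0_def using fin_leaves card_leaves by (auto simp: card_cartesian_product)

end

theorem theorem1:
  fixes n :: nat
  assumes "n \<ge> 2"
  shows "psi (ccc_verts n) (ccc_adj n) = 24 * 7 ^ (n - 2)"
proof -
  interpret ccc n using assms by unfold_locales
  show ?thesis unfolding psi_def
  proof (rule Least_equality)
    show "\<exists>Z. finite Z \<and> card Z = 24 * 7 ^ (n - 2) \<and> doubly_resolving (ccc_verts n) (ccc_adj n) Z"
      using Z0_props drs_Z0 by blast
  next
    fix k assume "\<exists>Z. finite Z \<and> card Z = k \<and> doubly_resolving (ccc_verts n) (ccc_adj n) Z"
    then obtain Z where "finite Z" "card Z = k" "doubly_resolving (ccc_verts n) (ccc_adj n) Z" by blast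
    then show "24 * 7 ^ (n - 2) \<le> k" using low by fastforce
  qed
qed


end
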